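(* Let $\mathcal T\ge2$, $\mathcal S\ge\max\{2\mathcal T,6\}$, and $(t,x)\in\mathbb R\times\mathbb R^3$ with $|t-|x||\le1$ and $|x|\ge\max\{12,\mathcal T,2\mathcal S\}$. Then for $\sigma\in[0,1)$, $$\frac{1}{t+\mathcal T}\int_{|z|=t+\mathcal T}\frac{dS(z)}{|x+z|^{3-\sigma}}\le\frac{C}{|x|^{1-\sigma}},$$ with $C$ independent of $t$ and $x$.
   Context: $dS$ is the surface measure on the sphere $\{|z|=t+\mathcal T\}\subset\mathbb R^3$. *)

theory Defs
  imports "HOL-Analysis.Analysis"
begin

definition sphere_integral :: "(real^3 \<Rightarrow> real) \<Rightarrow> real \<Rightarrow> real" where
  "sphere_integral f r =
     (LINT p : {0..pi} \<times> {0..2*pi} | lborel.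
        f (r *\<^sub>R vector [sin (fst p) * cos (snd p), sin (fst p) * sin (snd p), cos (fst p)])
          * r^2 * sin (fst p))"

end

theory Submission
  imports Defs
begin


lemma sin_lower5: fixes y :: real assumes "0 \<le> y" "y \<le> 2" shows "y / 5 \<le> sin y"
proof -
  have b: "\<bar>sin y - (\<Sum>m<5. sin_coeff m * y ^ m)\<bar> \<le> inverse (fact 5) * \<bar>y\<bar> ^ 5"
    by (rule Maclaurin_sin_bound)
  have s: "(\<Sum>m<5. sin_coeff m * y ^ m) = y - y^3/6"
    by (simp add: lessThan_nat_numeral sin_coeff_def fact_numeral)
  have f: "inverse (fact 5 :: real) = 1/120" by (simp add: fact_numeral)
  have "\<bar>sin y - (y - y^3/6)\<bar> \<le> y^5/120" using b s f assms by simp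
  then have sb: "sin y \<ge> y - y^3/6 - y^5/120" using abs_le_iff[of "sin y - (y - y^3/6)" "y^5/120"] by linarith
  have y2: "y^2 \<le> 4" using assms power_mono[of y 2 2] by simp
  have y4: "y^4 \<le> 16" using assms power_mono[of y 2 4] by simp
  have "y * (y^2/6 + y^4/120) \<le> y * (4/6 + 16/120)"
    using y2 y4 assms by (intro mult_left_mono) auto
  moreover have "y * (y^2/6 + y^4/120) = y^3/6 + y^5/120"
    by (simp add: eval_nat_numeral field_simps)
  moreover have "y * (4/6 + 16/120) = 4*y/5" by simp
  ultimately show ?thesis using sb by linarith
qed

lemma abs_sin_diff_le: fixes x y :: real shows "\<bar>sin x - sin y\<bar> \<le> \<bar>x - y\<bar>"
proof -
  have "sin x - sin y = 2 * sin ((x - y) / 2) * cos ((x + y) / 2)"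
    by (rule sin_diff_sin)
  then have "\<bar>sin x - sin y\<bar> \<le> 2 * \<bar>sin ((x - y) / 2)\<bar>"
    by (simp add: abs_mult mult_left_le)
  moreover have "\<bar>sin ((x-y)/2)\<bar> \<le> \<bar>(x-y)/2\<bar>" by (rule abs_sin_x_le_abs_x)
  ultimately show ?thesis by simp
qed



lemma one_minus_cos_lower: fixes w :: real assumes "\<bar>w\<bar> \<le> pi"
  shows "w^2 / 50 \<le> 1 - cos w"
proof -
  have "\<bar>w/2\<bar> \<le> 2" using assms pi_less_4 by auto
  have "\<bar>w/2\<bar>/5 \<le> \<bar>sin (w/2)\<bar>"
  proof (cases "w \<ge> 0")
    case True then show ?thesis using sin_lower5[of "w/2"] \<open>\<bar>w/2\<bar> \<le> 2\<close> by auto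
  next
    case False then show ?thesis using sin_lower5[of "-w/2"] \<open>\<bar>w/2\<bar> \<le> 2\<close> by auto
  qed
  then have "(\<bar>w/2\<bar>/5)^2 \<le> \<bar>sin (w/2)\<bar>^2"
    by (intro power_mono) auto
  then have "(\<bar>w/2\<bar>/5)^2 \<le> (sin (w/2))^2" by simp
  moreover have "1 - cos w = 2 * (sin (w/2))^2"
    using cos_double_sin[of "w/2"] by simp
  ultimately show ?thesis by (simp add: power2_eq_square)
qed

definition MM :: "real \<Rightarrow> real" where "MM g = 2 + 2 / (2*g - 1)"

lemma int_tail:
  fixes g :: real assumes "g > 1/2"
  shows "(\<integral>\<^sup>+z. ennreal (z powr (-2*g)) * indicator {1..} z \<partial>lborel) = ennreal (1/(2*g-1))"
proof -
  have g1: "2*g - 1 > 0" using assms by simp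
  have e: "- ((1-2*g) * t) / (2*g-1) = t" for t using g1 by (simp add: field_simps)
  have "(\<integral>\<^sup>+z. ennreal (z powr (-2*g)) * indicator {1..} z \<partial>lborel) = 0 - (- (1 powr (1-2*g)) / (2*g-1))"
  proof (rule nn_integral_FTC_atLeast[where F="\<lambda>z. - (z powr (1-2*g)) / (2*g-1)" and T=0])
    show "(\<lambda>z. z powr (-2*g)) \<in> borel_measurable borel" by measurable
    fix x :: real assume "1 \<le> x"
    show "0 \<le> x powr (-2*g)" by simp
    have "((\<lambda>z. - (z powr (1-2*g)) / (2*g-1)) has_real_derivative
          - ((1-2*g) * x powr (1-2*g-1)) / (2*g-1)) (at x)"
      using \<open>1 \<le> x\<close> g1 by (auto intro!: derivative_eq_intros)
    moreover have "- ((1-2*g) * x powr (1-2*g-1)) / (2*g-1) = x powr (-2*g)"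
      using e[of "x powr (1-2*g-1)"] by simp
    ultimately show "((\<lambda>z. - (z powr (1-2*g)) / (2*g-1)) has_real_derivative x powr (-2*g)) (at x)"
      by simp
  next
    have "((\<lambda>z. z powr (1-2*g)) \<longlongrightarrow> 0) at_top"
      using assms by (intro tendsto_neg_powr filterlim_ident) auto
    then have "((\<lambda>z. - (z powr (1-2*g)) / (2*g-1)) \<longlongrightarrow> - 0 / (2*g-1)) at_top"
      by (intro tendsto_intros) (use g1 in auto)
    then show "((\<lambda>z. - (z powr (1-2*g)) / (2*g-1)) \<longlongrightarrow> 0) at_top" by simp
  qed
  then show ?thesis by simp
qed

lemma int_basic:
  fixes g :: real assumes "g > 1/2"
  shows "(\<integral>\<^sup>+z. ennreal ((1 + z^2) powr (-g)) \<partial>lborel) \<le> ennreal (MM g)"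
proof -
  have g1: "2*g - 1 > 0" using assms by simp
  let ?h = "\<lambda>z::real. ennreal (z powr (-2*g)) * indicator {1..} z"
  have pw: "ennreal ((1 + z^2) powr (-g)) \<le> indicator {-1..1} z + ?h z + ?h (-z)" for z :: real
  proof -
    consider "\<bar>z\<bar> \<le> 1" | "z > 1" | "z < -1" by linarith
    then show ?thesis
    proof cases
      case 1
      have "(1 + z^2) powr (-g) \<le> 1 powr (-g)" using assms by (intro powr_mono2') auto
      then have "(1 + z^2) powr (-g) \<le> 1" by simp
      then have "ennreal ((1 + z^2) powr (-g)) \<le> indicator {-1..1} z" using 1
        by (simp add: indicator_def abs_le_iff)
      then show ?thesis by (intro add_increasing2) auto
    next
      case 2
      have "(1 + z^2) powr (-g) \<le> (z^2) powr (-g)" using assms 2 by (intro powr_mono2') auto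
      also have "(z^2) powr (-g) = z powr (-2*g)"
      proof -
        have "(z powr 2) powr (-g) = z powr (2 * (-g))" by (rule powr_powr)
        moreover have "z powr 2 = z^2" using 2 by (simp add: powr_numeral)
        ultimately show ?thesis by simp
      qed
      finally show ?thesis using 2 by (auto simp: indicator_def)
    next
      case 3
      have "(1 + z^2) powr (-g) \<le> (z^2) powr (-g)" using assms 3 by (intro powr_mono2') auto
      also have "(z^2) = (-z)^2" by simp
      also have "((-z)^2) powr (-g) = (-z) powr (-2*g)"
      proof -
        have "((-z) powr 2) powr (-g) = (-z) powr (2 * (-g))" by (rule powr_powr)
        moreover have "(-z) powr 2 = (-z)^2" using 3 by (subst powr_numeral) auto
        ultimately show ?thesis by simp
      qed
      finally show ?thesis using 3 by (auto simp: indicator_def)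
    qed
  qed
  have m1: "(\<lambda>z::real. indicator {-1..1} z :: ennreal) \<in> borel_measurable lborel" by measurable
  have m2: "?h \<in> borel_measurable lborel" by measurable
  have m2': "?h \<in> borel_measurable borel" by measurable
  have m3: "(\<lambda>z. ?h (-z)) \<in> borel_measurable lborel" by measurable
  have "(\<integral>\<^sup>+z. ennreal ((1 + z^2) powr (-g)) \<partial>lborel) \<le>
        (\<integral>\<^sup>+z. indicator {-1..1} z + ?h z + ?h (-z) \<partial>lborel)"
    by (intro nn_integral_mono pw)
  also have "\<dots> = (\<integral>\<^sup>+z. indicator {-1..1} z + ?h z \<partial>lborel) + (\<integral>\<^sup>+z. ?h (-z) \<partial>lborel)"
    by (intro nn_integral_add) (use m1 m2 m3 in auto)
  also have "(\<integral>\<^sup>+z. indicator {-1..1} z + ?h z \<partial>lborel) = (\<integral>\<^sup>+z. indicator {-1..1::real} z \<partial>lborel) + (\<integral>\<^sup>+z. ?h z \<partial>lborel)"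
    by (intro nn_integral_add) (use m1 m2 m3 in auto)
  also have "(\<integral>\<^sup>+z. ?h (-z) \<partial>lborel) = (\<integral>\<^sup>+z. ?h z \<partial>lborel)"
  proof -
    have "(\<integral>\<^sup>+z. ?h z \<partial>lborel) = ennreal \<bar>-1\<bar> * (\<integral>\<^sup>+x. ?h (0 + -1 * x) \<partial>lborel)"
      by (rule nn_integral_real_affine) (use m2' in auto)
    then show ?thesis by simp
  qed
  also have "(\<integral>\<^sup>+z. indicator {-1..1::real} z \<partial>lborel) = ennreal 2"
    by simp
  also have "(\<integral>\<^sup>+z. ?h z \<partial>lborel) = ennreal (1/(2*g-1))" by (rule int_tail[OF assms])
  also have "ennreal 2 + ennreal (1/(2*g-1)) + ennreal (1/(2*g-1)) = ennreal (MM g)"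
  proof -
    have "MM g = (2 + 1/(2*g-1)) + 1/(2*g-1)" by (simp add: MM_def)
    moreover have "ennreal ((2 + 1/(2*g-1)) + 1/(2*g-1)) = ennreal (2 + 1/(2*g-1)) + ennreal (1/(2*g-1))"
      using g1 by (intro ennreal_plus) auto
    moreover have "ennreal (2 + 1/(2*g-1)) = ennreal 2 + ennreal (1/(2*g-1))"
      using g1 by (intro ennreal_plus) auto
    ultimately show ?thesis by simp
  qed
  finally show ?thesis .
qed



lemma ennreal_div_bound:
  fixes X :: ennreal and c M :: real
  assumes "c > 0" "M \<ge> 0" "ennreal c * X \<le> ennreal M"
  shows "X \<le> ennreal (M / c)"
proof -
  have "X = ennreal (1/c) * (ennreal c * X)"
    using assms by (simp add: mult.assoc[symmetric] ennreal_mult[symmetric])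
  also have "\<dots> \<le> ennreal (1/c) * ennreal M" using assms by (intro mult_left_mono) auto
  also have "\<dots> = ennreal (M / c)" using assms by (simp add: ennreal_mult[symmetric])
  finally show ?thesis .
qed

lemma MM_pos: "g > 1/2 \<Longrightarrow> MM g > 0"
  unfolding MM_def by (simp add: add_pos_pos)

lemma int_scaled:
  fixes g K s :: real assumes "g > 1/2" "K > 0"
  shows "(\<integral>\<^sup>+y. ennreal ((1 + K*(y - s)^2) powr (-g)) \<partial>lborel) \<le> ennreal (MM g / sqrt K)"
proof -
  let ?f = "\<lambda>z::real. ennreal ((1 + z^2) powr (-g))"
  have mf: "?f \<in> borel_measurable borel" by measurable
  have sK: "sqrt K > 0" using assms by simp
  have "(\<integral>\<^sup>+z. ?f z \<partial>lborel) = ennreal \<bar>sqrt K\<bar> * (\<integral>\<^sup>+y. ?f (- sqrt K * s + sqrt K * y) \<partial>lborel)"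
    by (rule nn_integral_real_affine) (use mf sK in auto)
  also have "(\<lambda>y. ?f (- sqrt K * s + sqrt K * y)) = (\<lambda>y. ennreal ((1 + K*(y - s)^2) powr (-g)))"
  proof
    fix y
    have "(- sqrt K * s + sqrt K * y)^2 = (sqrt K)^2 * (y - s)^2" by (simp add: power2_eq_square algebra_simps)
    also have "\<dots> = K * (y-s)^2" using assms by simp
    finally show "?f (- sqrt K * s + sqrt K * y) = ennreal ((1 + K*(y - s)^2) powr (-g))" by simp
  qed
  finally have "ennreal (sqrt K) * (\<integral>\<^sup>+y. ennreal ((1 + K*(y - s)^2) powr (-g)) \<partial>lborel) \<le> ennreal (MM g)"
    using int_basic[OF assms(1)] sK by simp
  then show ?thesis using sK MM_pos[OF assms(1)] by (intro ennreal_div_bound) auto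
qed



definition GG :: "real \<Rightarrow> real \<Rightarrow> real \<Rightarrow> real \<Rightarrow> real \<times> real \<Rightarrow> real" where
  "GG K gp al s0 p = indicator {0..pi} (fst p) * (sin (fst p) * ((1 + K*(fst p - al)^2) powr (-gp)
      / (1 + K*(fst p - al)^2 + K*(sin (fst p))^2*(snd p - s0)^2)))"

lemma inner_bound:
  fixes K gp al s0 th :: real
  assumes K: "K > 0" and gp: "gp \<ge> 0"
  shows "(\<integral>\<^sup>+ph. ennreal (GG K gp al s0 (th, ph)) \<partial>lborel)
         \<le> ennreal (MM 1 / sqrt K * (1 + K*(th - al)^2) powr (-(gp + 1/2)))"
proof (cases "th \<in> {0..pi} \<and> sin th > 0")
  case False
  then have "sin th = 0 \<or> th \<notin> {0..pi}" using sin_ge_zero[of th] by force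
  then have "GG K gp al s0 (th, ph) = 0" for ph unfolding GG_def by auto
  then show ?thesis by simp
next
  case True
  define S where "S = sin th"
  define A where "A = 1 + K*(th - al)^2"
  have S: "S > 0" using True S_def by simp
  have A: "A \<ge> 1" unfolding A_def using K by simp
  define c where "c = S * A powr (-gp) / A"
  have c: "c \<ge> 0" unfolding c_def using S A by simp
  define K' where "K' = K * S^2 / A"
  have K': "K' > 0" unfolding K'_def using K S A by simp
  have eq: "GG K gp al s0 (th, ph) = c * (1 + K' * (ph - s0)^2) powr (-1)" for ph
  proof -
    have "1 + K' * (ph - s0)^2 > 0" using K' by (simp add: add_pos_nonneg)
    then have "(1 + K' * (ph - s0)^2) powr (-1) = 1 / (1 + K' * (ph - s0)^2)"
      by (simp add: powr_minus_divide)
    moreover have "A + K*S^2*(ph - s0)^2 = A * (1 + K' * (ph - s0)^2)"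
      unfolding K'_def using A by (simp add: field_simps)
    ultimately show ?thesis
      unfolding GG_def c_def using True A
      by (simp add: S_def[symmetric] A_def[symmetric] field_simps)
  qed
  have "(\<integral>\<^sup>+ph. ennreal (GG K gp al s0 (th, ph)) \<partial>lborel)
      = (\<integral>\<^sup>+ph. ennreal c * ennreal ((1 + K' * (ph - s0)^2) powr (-1)) \<partial>lborel)"
  proof (rule nn_integral_cong)
    fix ph :: real
    show "ennreal (GG K gp al s0 (th, ph)) = ennreal c * ennreal ((1 + K' * (ph - s0)^2) powr (-1))"
      unfolding eq using c by (intro ennreal_mult) auto
  qed
  also have "\<dots> = ennreal c * (\<integral>\<^sup>+ph. ennreal ((1 + K' * (ph - s0)^2) powr (-1)) \<partial>lborel)"
    by (rule nn_integral_cmult) measurable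
  also have "\<dots> \<le> ennreal c * ennreal (MM 1 / sqrt K')"
    using int_scaled[of 1 K' s0] K' by (intro mult_left_mono) auto
  also have "\<dots> = ennreal (c * (MM 1 / sqrt K'))"
    using c MM_pos[of 1] K' by (intro ennreal_mult[symmetric]) auto
  also have "c * (MM 1 / sqrt K') = MM 1 / sqrt K * A powr (-(gp + 1/2))"
  proof -
    have "sqrt K' = sqrt K * S / sqrt A" unfolding K'_def using S A K
      by (simp add: real_sqrt_mult real_sqrt_divide)
    moreover have "A powr (-(gp + 1/2)) = A powr (-gp) / sqrt A"
    proof -
      have "A powr (-(gp + 1/2)) = A powr (-gp) * A powr (-(1/2))"
        by (simp add: powr_add[symmetric])
      also have "A powr (-(1/2)) = 1 / sqrt A"
        using A by (simp add: powr_minus_divide powr_half_sqrt)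
      finally show ?thesis by simp
    qed
    moreover have "sqrt A > 0" using A by simp
    moreover have "sqrt K > 0" using K by simp
    moreover have "A = sqrt A * sqrt A" using A by simp
    moreover have key: "S * P / (q*q) * (M / (k * S / q)) = M / k * (P / q)"
      if "S > 0" "q > 0" "k > 0" for S P q M k :: real
      using that by (simp add: field_simps power2_eq_square)
    ultimately show ?thesis unfolding c_def using S
      by (metis key)
  qed
  finally show ?thesis by (simp add: A_def)
qed



lemma int_2d:
  fixes K gp al s0 :: real
  assumes K: "K > 0" and gp: "gp > 0"
  shows "(\<integral>\<^sup>+p. ennreal (GG K gp al s0 p) \<partial>lborel) \<le> ennreal (MM 1 * MM (gp + 1/2) / K)"
proof -
  have m: "(\<lambda>p. ennreal (GG K gp al s0 p)) \<in> borel_measurable (lborel \<Otimes>\<^sub>M lborel)"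
    unfolding GG_def by measurable
  have "(\<integral>\<^sup>+p. ennreal (GG K gp al s0 p) \<partial>lborel) = (\<integral>\<^sup>+p. ennreal (GG K gp al s0 p) \<partial>(lborel \<Otimes>\<^sub>M lborel))"
    by (simp add: lborel_prod)
  also have "\<dots> = (\<integral>\<^sup>+th. (\<integral>\<^sup>+ph. ennreal (GG K gp al s0 (th, ph)) \<partial>lborel) \<partial>lborel)"
    by (rule lborel.nn_integral_fst[symmetric]) (rule m)
  also have "\<dots> \<le> (\<integral>\<^sup>+th. ennreal (MM 1 / sqrt K * (1 + K*(th - al)^2) powr (-(gp + 1/2))) \<partial>lborel)"
    by (intro nn_integral_mono inner_bound K) (use gp in auto)
  also have "\<dots> = (\<integral>\<^sup>+th. ennreal (MM 1 / sqrt K) * ennreal ((1 + K*(th - al)^2) powr (-(gp + 1/2))) \<partial>lborel)"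
    using MM_pos[of 1] K by (intro nn_integral_cong ennreal_mult) auto
  also have "\<dots> = ennreal (MM 1 / sqrt K) * (\<integral>\<^sup>+th. ennreal ((1 + K*(th - al)^2) powr (-(gp + 1/2))) \<partial>lborel)"
    by (rule nn_integral_cmult) measurable
  also have "\<dots> \<le> ennreal (MM 1 / sqrt K) * ennreal (MM (gp + 1/2) / sqrt K)"
    using int_scaled[of "gp + 1/2" K al] K gp by (intro mult_left_mono) auto
  also have "\<dots> = ennreal (MM 1 / sqrt K * (MM (gp + 1/2) / sqrt K))"
    using MM_pos[of 1] MM_pos[of "gp + 1/2"] K gp by (intro ennreal_mult[symmetric]) auto
  also have "MM 1 / sqrt K * (MM (gp + 1/2) / sqrt K) = MM 1 * MM (gp + 1/2) / K"
    using K by (simp add: field_simps)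
  finally show ?thesis .
qed



lemma norm_sq3: fixes v :: "real^3" shows "(norm v)^2 = (v$1)^2 + (v$2)^2 + (v$3)^2"
  by (simp only: power2_norm_eq_inner inner_vec_def sum_3 inner_real_def) (simp add: power2_eq_square)

lemma geom:
  fixes x :: "real^3" and n r th ph al be :: real
  assumes "x$1 = -n * (sin al * cos be)" "x$2 = -n*(sin al * sin be)" "x$3 = -n * cos al"
  shows "(norm (x + r *\<^sub>R vector[sin th * cos ph, sin th * sin ph, cos th]))^2
     = (r - n)^2 + r*n*(2 - 2*cos(th - al) + 2* sin th * sin al * (1 - cos(ph - be)))"
proof -
  define u1 where "u1 = sin th * cos ph"
  define u2 where "u2 = sin th * sin ph"
  define u3 where "u3 = cos th"
  define e1 where "e1 = sin al * cos be"
  define e2 where "e2 = sin al * sin be"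
  define e3 where "e3 = cos al"
  have L: "(norm (x + r *\<^sub>R vector[sin th * cos ph, sin th * sin ph, cos th]))^2
      = (r*u1 - n*e1)^2 + (r*u2 - n*e2)^2 + (r*u3 - n*e3)^2"
    unfolding norm_sq3 using assms by (simp add: u1_def u2_def u3_def e1_def e2_def e3_def)
  have U: "u1^2 + u2^2 + u3^2 = 1"
  proof -
    have "u1^2 + u2^2 + u3^2 = (sin th)^2 * ((sin ph)^2 + (cos ph)^2) + (cos th)^2"
      unfolding u1_def u2_def u3_def by algebra
    also have "\<dots> = 1" by (simp only: sin_cos_squared_add mult_1_right)
    finally show ?thesis .
  qed
  have E: "e1^2 + e2^2 + e3^2 = 1"
  proof -
    have "e1^2 + e2^2 + e3^2 = (sin al)^2 * ((sin be)^2 + (cos be)^2) + (cos al)^2"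
      unfolding e1_def e2_def e3_def by algebra
    also have "\<dots> = 1" by (simp only: sin_cos_squared_add mult_1_right)
    finally show ?thesis .
  qed
  have D: "u1*e1 + u2*e2 + u3*e3 = sin th * sin al * cos (ph - be) + cos th * cos al"
    unfolding u1_def u2_def u3_def e1_def e2_def e3_def cos_diff by (simp add: algebra_simps)
  have "(r*u1 - n*e1)^2 + (r*u2 - n*e2)^2 + (r*u3 - n*e3)^2
      = r^2 * (u1^2 + u2^2 + u3^2) + n^2 * (e1^2 + e2^2 + e3^2) - 2*r*n*(u1*e1 + u2*e2 + u3*e3)"
    by (simp add: power2_eq_square algebra_simps)
  also have "\<dots> = r^2 + n^2 - 2*r*n*(sin th * sin al * cos (ph - be) + cos th * cos al)"
    using U E D by simp
  also have "\<dots> = (r - n)^2 + r*n*(2 - 2*cos(th - al) + 2* sin th * sin al * (1 - cos(ph - be)))"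
    unfolding cos_diff[of th al] by (simp add: power2_eq_square algebra_simps)
  finally show ?thesis using L by simp
qed

lemma angles:
  fixes x :: "real^3"
  assumes n: "norm x > 0"
  obtains al be where "0 \<le> al" "al \<le> pi" "0 \<le> be" "be < 2*pi"
    "x$1 = -norm x * (sin al * cos be)" "x$2 = -norm x*(sin al * sin be)" "x$3 = -norm x * cos al"
proof -
  define e1 where "e1 = - x$1 / norm x"
  define e2 where "e2 = - x$2 / norm x"
  define e3 where "e3 = - x$3 / norm x"
  have E: "e1^2 + e2^2 + e3^2 = 1"
  proof -
    have "e1^2 + e2^2 + e3^2 = ((x$1)^2 + (x$2)^2 + (x$3)^2) / (norm x)^2"
      unfolding e1_def e2_def e3_def by (simp add: power_divide add_divide_distrib)
    also have "\<dots> = 1" using n by (simp add: norm_sq3[symmetric])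
    finally show ?thesis .
  qed
  have e3b: "-1 \<le> e3" "e3 \<le> 1"
  proof -
    have "e3^2 \<le> 1" using E by (smt (verit) zero_le_power2)
    then have "\<bar>e3\<bar> \<le> 1" by (simp add: abs_square_le_1)
    then show "-1 \<le> e3" "e3 \<le> 1" by (simp_all add: abs_le_iff)
  qed
  define al where "al = arccos e3"
  have al: "0 \<le> al" "al \<le> pi" using arccos_bounded[OF e3b] al_def by auto
  have cal: "cos al = e3" unfolding al_def using e3b by simp
  have sal: "sin al = sqrt (1 - e3^2)" unfolding al_def using e3b by (simp add: sin_arccos)
  have "1 - e3^2 \<ge> 0" using e3b by (simp add: abs_square_le_1)
  then have "(sin al)^2 = 1 - e3^2" using sal by simp
  then have sal2: "(sin al)^2 = e1^2 + e2^2" using E by linarith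
  obtain be where be: "0 \<le> be" "be < 2*pi" "e1 = sin al * cos be" "e2 = sin al * sin be"
  proof (cases "sin al = 0")
    case True
    then have "e1 = 0" "e2 = 0" using sal2 by (simp_all add: sum_power2_eq_zero_iff)
    then show ?thesis using that[of 0] True by simp
  next
    case False
    have "(e1 / sin al)^2 + (e2 / sin al)^2 = (e1^2 + e2^2) / (sin al)^2"
      by (simp add: power_divide add_divide_distrib)
    also have "\<dots> = 1" using False sal2[symmetric] by simp
    finally have "(e1 / sin al)^2 + (e2 / sin al)^2 = 1" .
    then obtain t where "0 \<le> t" "t < 2*pi" "e1 / sin al = cos t" "e2 / sin al = sin t"
      by (rule sincos_total_2pi)
    then show ?thesis using that[of t] False by (simp add: field_simps)
  qed
  show ?thesis
  proof (rule that[OF al be(1,2)])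
    show "x$1 = -norm x * (sin al * cos be)" using be(3) n unfolding e1_def by (simp add: field_simps)
    show "x$2 = -norm x * (sin al * sin be)" using be(4) n unfolding e2_def by (simp add: field_simps)
    show "x$3 = -norm x * cos al" using cal n unfolding e3_def by (simp add: field_simps)
  qed
qed



lemma Q_lower:
  fixes th al ph be :: real
  assumes th: "0 \<le> th" "th \<le> pi" and al: "0 \<le> al" "al \<le> pi"
    and ph: "0 \<le> ph" "ph \<le> 2*pi" and be: "0 \<le> be" "be < 2*pi"
  obtains s0 where "s0 \<in> {be, be + 2*pi, be - 2*pi}"
    "((th-al)^2 + (sin th)^2 * (ph - s0)^2)/3200 \<le> 2 - 2*cos(th - al) + 2 * sin th * sin al * (1 - cos(ph - be))"
proof -
  obtain s0 where s0: "s0 \<in> {be, be + 2*pi, be - 2*pi}" "\<bar>ph - s0\<bar> \<le> pi" "cos (ph - be) = cos (ph - s0)"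
  proof -
    consider "\<bar>ph - be\<bar> \<le> pi" | "ph - be > pi" | "ph - be < -pi" by linarith
    then show ?thesis
    proof cases
      case 1 then show ?thesis using that[of be] by auto
    next
      case 2
      have "cos (ph - be) = cos ((ph - (be + 2*pi)) + 2*pi)" by (simp add: algebra_simps)
      also have "\<dots> = cos (ph - (be + 2*pi))" by (rule cos_periodic)
      finally show ?thesis using that[of "be + 2*pi"] 2 ph be by auto
    next
      case 3
      have "cos (ph - (be - 2*pi)) = cos ((ph - be) + 2*pi)" by (simp add: algebra_simps)
      also have "\<dots> = cos (ph - be)" by (rule cos_periodic)
      finally show ?thesis using that[of "be - 2*pi"] 3 ph be by auto
    qed
  qed
  define w where "w = ph - s0"
  define d where "d = th - al"
  have dpi: "\<bar>d\<bar> \<le> pi" unfolding d_def using th al by auto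
  have h1: "d^2/50 \<le> 1 - cos d" by (rule one_minus_cos_lower[OF dpi])
  have h2: "w^2/50 \<le> 1 - cos (ph - be)" using one_minus_cos_lower[of w] s0 unfolding w_def by simp
  have st: "sin th \<ge> 0" using th by (simp add: sin_ge_zero)
  have sa: "sin al \<ge> 0" using al by (simp add: sin_ge_zero)
  have w0: "w^2 \<ge> 0" by simp
  have wpi: "w^2 \<le> 16"
  proof -
    have "\<bar>w\<bar> \<le> 4" using s0(2) pi_less_4 unfolding w_def by linarith
    then have "\<bar>w\<bar>^2 \<le> 4^2" by (intro power_mono) auto
    then show ?thesis by simp
  qed
  have "(d^2 + (sin th)^2 * w^2)/3200 \<le> 2 - 2*cos d + 2 * sin th * sin al * (1 - cos(ph - be))"
  proof (cases "sin al \<ge> sin th / 2")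
    case True
    have m1: "sin th * (sin th / 2) \<le> sin th * sin al" using True st by (intro mult_left_mono) auto
    have "sin th * (sin th / 2) * (w^2/50) \<le> sin th * sin al * (1 - cos(ph - be))"
      by (rule mult_mono) (use h2 w0 st sa m1 in auto)
    then have "(sin th)^2 * w^2 / 100 \<le> sin th * sin al * (1 - cos(ph - be))"
      by (simp add: power2_eq_square)
    moreover have "0 \<le> (sin th)^2 * w^2" by simp
    moreover have "0 \<le> d^2" by simp
    moreover have "2 * sin th * sin al * (1 - cos(ph - be)) = 2 * (sin th * sin al * (1 - cos(ph - be)))" by simp
    moreover have "(d^2 + (sin th)^2 * w^2)/3200 = d^2/3200 + ((sin th)^2 * w^2)/3200" by (simp add: add_divide_distrib)
    ultimately show ?thesis using h1 by linarith
  next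
    case False
    have "sin th - sin al \<le> \<bar>d\<bar>" using abs_sin_diff_le[of th al] unfolding d_def by linarith
    then have "sin th \<le> 2 * \<bar>d\<bar>" using False by linarith
    then have "(sin th)^2 \<le> (2 * \<bar>d\<bar>)^2" using st by (intro power_mono) auto
    then have s2: "(sin th)^2 \<le> 4 * d^2" by (simp add: power_mult_distrib)
    have "(sin th)^2 * w^2 \<le> (4 * d^2) * 16" by (rule mult_mono) (use s2 wpi w0 in auto)
    moreover have "0 \<le> sin th * sin al * (1 - cos(ph - be))"
      using st sa by (simp add: mult_nonneg_nonneg)
    moreover have "0 \<le> d^2" by simp
    moreover have "2 * sin th * sin al * (1 - cos(ph - be)) = 2 * (sin th * sin al * (1 - cos(ph - be)))" by simp
    moreover have "(d^2 + (sin th)^2 * w^2)/3200 = d^2/3200 + ((sin th)^2 * w^2)/3200" by (simp add: add_divide_distrib)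
    ultimately show ?thesis using h1 by linarith
  qed
  then show ?thesis using that[OF s0(1)] unfolding w_def d_def by simp
qed



lemma GG_nonneg: assumes "K > 0" shows "0 \<le> GG K gp al s0 p"
proof (cases "fst p \<in> {0..pi}")
  case True
  then have "sin (fst p) \<ge> 0" by (simp add: sin_ge_zero)
  moreover have "0 < 1 + K*(fst p - al)^2 + K*(sin (fst p))^2*(snd p - s0)^2"
    using assms by (intro add_pos_nonneg) auto
  ultimately show ?thesis unfolding GG_def using True by simp
next
  case False then show ?thesis unfolding GG_def by simp
qed

lemma pw_bound:
  fixes x :: "real^3" and r n al be \<sigma> th ph :: real
  assumes x: "x$1 = -n * (sin al * cos be)" "x$2 = -n*(sin al * sin be)" "x$3 = -n * cos al"
    and rn: "r - n \<ge> 1" "n > 0"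
    and al: "0 \<le> al" "al \<le> pi" and be: "0 \<le> be" "be < 2*pi"
    and sig: "0 \<le> \<sigma>" "\<sigma> < 1"
    and th: "0 \<le> th" "th \<le> pi" and ph: "0 \<le> ph" "ph \<le> 2*pi"
  shows "1 / norm (x + r *\<^sub>R vector[sin th * cos ph, sin th * sin ph, cos th]) powr (3 - \<sigma>) * r^2 * sin th
    \<le> r^2 * (GG (r*n/3200) ((1-\<sigma>)/2) al be (th,ph) + GG (r*n/3200) ((1-\<sigma>)/2) al (be + 2*pi) (th,ph)
              + GG (r*n/3200) ((1-\<sigma>)/2) al (be - 2*pi) (th,ph))"
proof -
  define K where "K = r*n/3200"
  define gp where "gp = (1-\<sigma>)/2"
  have r: "r > 0" using rn by linarith
  have K: "K > 0" unfolding K_def using r rn by simp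
  have gp: "gp > 0" unfolding gp_def using sig by simp
  define N where "N = norm (x + r *\<^sub>R vector[sin th * cos ph, sin th * sin ph, cos th])"
  obtain s0 where s0: "s0 \<in> {be, be + 2*pi, be - 2*pi}"
    "((th-al)^2 + (sin th)^2 * (ph - s0)^2)/3200 \<le> 2 - 2*cos(th - al) + 2 * sin th * sin al * (1 - cos(ph - be))"
    using Q_lower[OF th al ph be] by blast
  define A where "A = 1 + K*(th - al)^2"
  define P where "P = 1 + K*(th - al)^2 + K*(sin th)^2*(ph - s0)^2"
  have A1: "A \<ge> 1" unfolding A_def using K by simp
  have AP: "A \<le> P" unfolding A_def P_def using K by simp
  have N2: "N^2 = (r - n)^2 + r*n*(2 - 2*cos(th - al) + 2 * sin th * sin al * (1 - cos(ph - be)))"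
    unfolding N_def by (rule geom[OF x])
  have "(r - n)^2 \<ge> 1" using rn by (simp add: one_le_power)
  moreover have "r*n*(((th-al)^2 + (sin th)^2 * (ph - s0)^2)/3200) \<le> r*n*(2 - 2*cos(th - al) + 2 * sin th * sin al * (1 - cos(ph - be)))"
    using s0(2) r rn by (intro mult_left_mono) auto
  moreover have "r*n*(((th-al)^2 + (sin th)^2 * (ph - s0)^2)/3200) = K*(th - al)^2 + K*(sin th)^2*(ph - s0)^2"
    unfolding K_def by (simp add: field_simps)
  ultimately have PN: "P \<le> N^2" unfolding P_def using N2 by linarith
  have P0: "P > 0" using A1 AP by linarith
  have N0: "N > 0" using PN P0 N_def by (metis norm_ge_zero order_less_le_trans power2_eq_square zero_less_mult_iff order_le_less)
  have eqN: "N powr (3 - \<sigma>) = (N^2) powr (gp + 1)"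
  proof -
    have "(N powr 2) powr (gp + 1) = N powr (2 * (gp + 1))" by (rule powr_powr)
    moreover have "N powr 2 = N^2" using N0 by (simp add: powr_numeral)
    moreover have "2 * (gp + 1) = 3 - \<sigma>" unfolding gp_def by simp
    ultimately show ?thesis by simp
  qed
  have "(N^2) powr (gp + 1) \<ge> P powr (gp + 1)" using PN P0 gp by (intro powr_mono2) auto
  then have "P powr (gp + 1) \<le> N powr (3 - \<sigma>)" using eqN by simp
  then have "1 / N powr (3 - \<sigma>) \<le> 1 / P powr (gp + 1)"
  proof -
    assume a: "P powr (gp + 1) \<le> N powr (3 - \<sigma>)"
    have "P powr (gp + 1) > 0" using P0 by simp
    moreover have "N powr (3 - \<sigma>) > 0" using N0 by simp
    ultimately have "0 < N powr (3 - \<sigma>) * P powr (gp + 1)" by (intro mult_pos_pos)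
    then show ?thesis by (intro divide_left_mono[OF a]) auto
  qed
  also have "1 / P powr (gp + 1) = P powr (-gp) / P"
    using P0 by (simp add: powr_add powr_minus_divide)
  also have "\<dots> \<le> A powr (-gp) / P"
    using P0 A1 AP gp by (intro divide_right_mono powr_mono2') auto
  finally have main: "1 / N powr (3 - \<sigma>) \<le> A powr (-gp) / P" .
  have st: "sin th \<ge> 0" using th by (simp add: sin_ge_zero)
  have "1 / N powr (3 - \<sigma>) * r^2 * sin th \<le> A powr (-gp) / P * r^2 * sin th"
    using main st by (intro mult_right_mono) auto
  also have "\<dots> = r^2 * GG K gp al s0 (th, ph)"
    unfolding GG_def A_def P_def using th by simp
  also have "\<dots> \<le> r^2 * (GG K gp al be (th,ph) + GG K gp al (be + 2*pi) (th,ph) + GG K gp al (be - 2*pi) (th,ph))"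
    using s0(1) GG_nonneg[OF K] by (intro mult_left_mono) (auto simp: add_increasing add_increasing2)
  finally show ?thesis unfolding N_def K_def gp_def .
qed

lemma integral_le_from_nn:
  fixes h :: "'a \<Rightarrow> real"
  assumes "\<And>p. 0 \<le> h p" "(\<integral>\<^sup>+p. ennreal (h p) \<partial>M) \<le> ennreal B" "0 \<le> B"
  shows "integral\<^sup>L M h \<le> B"
proof (cases "integrable M h")
  case True
  have "(\<integral>\<^sup>+p. ennreal (h p) \<partial>M) = ennreal (integral\<^sup>L M h)"
    by (rule nn_integral_eq_integral[OF True]) (use assms in auto)
  then show ?thesis using assms by (simp add: ennreal_le_iff)
next
  case False then show ?thesis using assms by (simp add: not_integrable_integral_eq)
qed



lemma GG_meas[measurable]: "GG K gp al s0 \<in> borel_measurable (lborel :: (real \<times> real) measure)"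
proof -
  have "(\<lambda>p. GG K gp al s0 p) \<in> borel_measurable (lborel \<Otimes>\<^sub>M lborel)"
    unfolding GG_def by measurable
  then show ?thesis by (simp add: lborel_prod)
qed

theorem lemmaE6:
  fixes T S \<sigma> :: real
  assumes "T \<ge> 2" and "S \<ge> max (2*T) 6" and "0 \<le> \<sigma>" and "\<sigma> < 1"
  shows "\<exists>C. \<forall>(t::real) (x::real^3).
           \<bar>t - norm x\<bar> \<le> 1 \<and> norm x \<ge> max 12 (max T (2*S)) \<longrightarrow>
           (1 / (t + T)) * sphere_integral (\<lambda>z. 1 / norm (x + z) powr (3 - \<sigma>)) (t + T)
             \<le> C / norm x powr (1 - \<sigma>)"
proof -
  define gp where "gp = (1-\<sigma>)/2"
  have gp: "gp > 0" unfolding gp_def using assms by simp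
  define C where "C = 9600 * (MM 1 * MM (gp + 1/2))"
  have MMp: "MM 1 * MM (gp + 1/2) > 0" using MM_pos[of 1] MM_pos[of "gp + 1/2"] gp by simp
  show ?thesis
  proof (intro exI[of _ C] allI impI, elim conjE)
    fix t :: real and x :: "real^3"
    assume tx: "\<bar>t - norm x\<bar> \<le> 1" and xb: "norm x \<ge> max 12 (max T (2*S))"
    define n where "n = norm x"
    define r where "r = t + T"
    have n: "n \<ge> 12" using xb n_def by simp
    have rn: "r - n \<ge> 1" using tx assms(1) unfolding r_def n_def by linarith
    have r: "r > 0" using rn n by linarith
    have n0: "n > 0" using n by simp
    obtain al be where al: "0 \<le> al" "al \<le> pi" and be: "0 \<le> be" "be < 2*pi"
      and x: "x$1 = -n * (sin al * cos be)" "x$2 = -n*(sin al * sin be)" "x$3 = -n * cos al"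
      using angles[of x] n0 unfolding n_def by blast
    define K where "K = r*n/3200"
    have K: "K > 0" unfolding K_def using r n0 by simp
    define B where "B = MM 1 * MM (gp + 1/2) / K"
    have B: "B > 0" unfolding B_def using MMp K by simp
    define F where "F = (\<lambda>p::real\<times>real. 1 / norm (x + r *\<^sub>R vector [sin (fst p) * cos (snd p), sin (fst p) * sin (snd p), cos (fst p)]) powr (3 - \<sigma>) * r^2 * sin (fst p))"
    define box where "box = {0..pi} \<times> {0..2*pi::real}"
    define G where "G = (\<lambda>s0 p. ennreal (r^2) * ennreal (GG K gp al s0 p))"
    have SI: "sphere_integral (\<lambda>z. 1 / norm (x + z) powr (3 - \<sigma>)) (t + T) = integral\<^sup>L lborel (\<lambda>p. indicator box p * F p)"
      unfolding sphere_integral_def set_lebesgue_integral_def F_def box_def r_def by simp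
    have pw: "ennreal (indicator box p * F p) \<le> G be p + G (be + 2*pi) p + G (be - 2*pi) p" for p
    proof (cases "p \<in> box")
      case True
      obtain th ph where p: "p = (th, ph)" by (cases p)
      have "F p \<le> r^2 * (GG K gp al be p + GG K gp al (be + 2*pi) p + GG K gp al (be - 2*pi) p)"
      proof -
        have b: "0 \<le> th" "th \<le> pi" "0 \<le> ph" "ph \<le> 2*pi" using True p unfolding box_def by auto
        have "F p = 1 / norm (x + r *\<^sub>R vector[sin th * cos ph, sin th * sin ph, cos th]) powr (3 - \<sigma>) * r^2 * sin th"
          unfolding F_def p by simp
        then show ?thesis unfolding K_def gp_def p
          using pw_bound[OF x rn n0 al be assms(3,4) b] by simp
      qed
      then have "ennreal (F p) \<le> ennreal (r^2 * GG K gp al be p + r^2 * GG K gp al (be + 2*pi) p + r^2 * GG K gp al (be - 2*pi) p)"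
        by (intro ennreal_leI) (simp add: algebra_simps)
      also have "\<dots> = G be p + G (be + 2*pi) p + G (be - 2*pi) p"
        unfolding G_def using GG_nonneg[OF K]
        by (simp add: ennreal_plus[symmetric] ennreal_mult[symmetric] del: ennreal_plus)
      finally show ?thesis using True by simp
    next
      case False then show ?thesis by simp
    qed
    have mG: "G s0 \<in> borel_measurable lborel" for s0 unfolding G_def by measurable
    have intG: "(\<integral>\<^sup>+p. G s0 p \<partial>lborel) \<le> ennreal (r^2 * B)" for s0
    proof -
      have "(\<integral>\<^sup>+p. G s0 p \<partial>lborel) = ennreal (r^2) * (\<integral>\<^sup>+p. ennreal (GG K gp al s0 p) \<partial>lborel)"
        unfolding G_def by (rule nn_integral_cmult) measurable
      also have "\<dots> \<le> ennreal (r^2) * ennreal B"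
        unfolding B_def by (intro mult_left_mono int_2d K gp) auto
      also have "\<dots> = ennreal (r^2 * B)" using B by (simp add: ennreal_mult)
      finally show ?thesis .
    qed
    have "(\<integral>\<^sup>+p. ennreal (indicator box p * F p) \<partial>lborel)
        \<le> (\<integral>\<^sup>+p. G be p + G (be + 2*pi) p + G (be - 2*pi) p \<partial>lborel)"
      by (intro nn_integral_mono pw)
    also have "\<dots> = (\<integral>\<^sup>+p. G be p + G (be + 2*pi) p \<partial>lborel) + (\<integral>\<^sup>+p. G (be - 2*pi) p \<partial>lborel)"
      by (intro nn_integral_add) (use mG in auto)
    also have "(\<integral>\<^sup>+p. G be p + G (be + 2*pi) p \<partial>lborel) = (\<integral>\<^sup>+p. G be p \<partial>lborel) + (\<integral>\<^sup>+p. G (be + 2*pi) p \<partial>lborel)"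
      by (intro nn_integral_add) (use mG in auto)
    also have "(\<integral>\<^sup>+p. G be p \<partial>lborel) + (\<integral>\<^sup>+p. G (be + 2*pi) p \<partial>lborel) + (\<integral>\<^sup>+p. G (be - 2*pi) p \<partial>lborel)
        \<le> ennreal (r^2 * B) + ennreal (r^2 * B) + ennreal (r^2 * B)"
      by (intro add_mono intG)
    also have "\<dots> = ennreal (3 * (r^2 * B))"
      using B by (simp add: ennreal_plus[symmetric] del: ennreal_plus)
    finally have nn: "(\<integral>\<^sup>+p. ennreal (indicator box p * F p) \<partial>lborel) \<le> ennreal (3 * (r^2 * B))" .
    have Fnn: "0 \<le> indicator box p * F p" for p
    proof (cases "p \<in> box")
      case True
      then have "sin (fst p) \<ge> 0" unfolding box_def by (auto intro: sin_ge_zero)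
      then show ?thesis using True unfolding F_def by simp
    qed simp
    have I: "integral\<^sup>L lborel (\<lambda>p. indicator box p * F p) \<le> 3 * (r^2 * B)"
      by (rule integral_le_from_nn[OF Fnn nn]) (use B in simp)
    have "(1 / (t + T)) * sphere_integral (\<lambda>z. 1 / norm (x + z) powr (3 - \<sigma>)) (t + T)
        \<le> (1 / r) * (3 * (r^2 * B))"
      unfolding SI using I r unfolding r_def by (intro mult_left_mono) auto
    also have "\<dots> = C / n"
      unfolding B_def K_def C_def using r n0 by (simp add: field_simps power2_eq_square)
    also have "\<dots> \<le> C / n powr (1 - \<sigma>)"
    proof -
      have "n powr (1 - \<sigma>) \<le> n powr 1" using n assms by (intro powr_mono) auto
      moreover have "n powr (1 - \<sigma>) > 0" using n0 by simp
      moreover have "C > 0" unfolding C_def using MMp by simp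
      ultimately show ?thesis using n0 by (intro divide_left_mono) auto
    qed
    finally show "(1 / (t + T)) * sphere_integral (\<lambda>z. 1 / norm (x + z) powr (3 - \<sigma>)) (t + T)
             \<le> C / norm x powr (1 - \<sigma>)" unfolding n_def .
  qed
qed

end
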